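(* Let $d\in\mathbb{Z}_2^{l+r}$ and let $A\subset\mathbb{Z}_2^{l+r}$ be a subgroup. Then $d(A^\perp)=(A^d)^{\perp_d}$, where $d(A^\perp)=\{d\alpha:\alpha\in A^\perp\}$.
   Context: Products of codewords are componentwise. For $c\in\mathbb{Z}_2^{l+r}$, $|c|=|c|_l-|c|_r$, where $|c|_l,|c|_r$ are the numbers of ones in the first $l$ and last $r$ coordinates. $A^\perp=\{\beta\in\mathbb{Z}_2^{l+r}:|\beta a|\in2\mathbb{Z}\ \forall a\in A\}$. $\mathbb{Z}_2^d=\{\alpha:d\alpha=\alpha\}$, $A^d=A\cap\mathbb{Z}_2^d$, and for a subgroup $H\subset\mathbb{Z}_2^d$, $H^{\perp_d}=\{\alpha\in\mathbb{Z}_2^d:|\alpha h|\in2\mathbb{Z}\ \forall h\in H\}$. *)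

theory Defs
  imports Main
begin

text \<open>A vector c in Z_2^(l+r) is represented by its support, a subset of {0..<l+r}
  (coordinates 0..l-1 are the first l, coordinates l..l+r-1 are the last r).\<close>

definition vecs :: "nat \<Rightarrow> nat \<Rightarrow> nat set set" where
  "vecs l r = {c. c \<subseteq> {0..<l+r}}"

definition vadd :: "nat set \<Rightarrow> nat set \<Rightarrow> nat set" where
  "vadd a b = (a - b) \<union> (b - a)"

definition vmult :: "nat set \<Rightarrow> nat set \<Rightarrow> nat set" where
  "vmult a b = a \<inter> b"

definition wt :: "nat \<Rightarrow> nat \<Rightarrow> nat set \<Rightarrow> int" where
  "wt l r c = int (card (c \<inter> {0..<l})) - int (card (c \<inter> {l..<l+r}))"

definition is_subgroup :: "nat \<Rightarrow> nat \<Rightarrow> nat set set \<Rightarrow> bool" where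
  "is_subgroup l r A \<longleftrightarrow> A \<subseteq> vecs l r \<and> {} \<in> A \<and> (\<forall>a\<in>A. \<forall>b\<in>A. vadd a b \<in> A)"

definition perp :: "nat \<Rightarrow> nat \<Rightarrow> nat set set \<Rightarrow> nat set set" where
  "perp l r A = {\<beta> \<in> vecs l r. \<forall>a\<in>A. even (wt l r (vmult \<beta> a))}"

definition Zd :: "nat \<Rightarrow> nat \<Rightarrow> nat set \<Rightarrow> nat set set" where
  "Zd l r d = {\<alpha> \<in> vecs l r. vmult d \<alpha> = \<alpha>}"

definition restr :: "nat \<Rightarrow> nat \<Rightarrow> nat set set \<Rightarrow> nat set \<Rightarrow> nat set set" where
  "restr l r A d = A \<inter> Zd l r d"

definition perp_d :: "nat \<Rightarrow> nat \<Rightarrow> nat set \<Rightarrow> nat set set \<Rightarrow> nat set set" where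
  "perp_d l r d H = {\<alpha> \<in> Zd l r d. \<forall>h\<in>H. even (wt l r (vmult \<alpha> h))}"

end

theory Submission
  imports Defs
begin

lemma wt_even:
  assumes "c \<subseteq> {0..<l+r}"
  shows "even (wt l r c) \<longleftrightarrow> even (card c)"
proof -
  have "c = (c \<inter> {0..<l}) \<union> (c \<inter> {l..<l+r})" using assms by auto
  moreover have "finite c" using assms finite_subset by blast
  moreover have "(c \<inter> {0..<l}) \<inter> (c \<inter> {l..<l+r}) = {}" by auto
  ultimately have "card c = card (c \<inter> {0..<l}) + card (c \<inter> {l..<l+r})"
    using card_Un_disjoint[of "c \<inter> {0..<l}" "c \<inter> {l..<l+r}"] by (metis finite_Int)
  then show ?thesis unfolding wt_def by presburger
qed

lemma card_vadd_parity:
  assumes "finite a" "finite b"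
  shows "even (card (vadd a b)) \<longleftrightarrow> (even (card a) \<longleftrightarrow> even (card b))"
proof -
  have 1: "card (vadd a b) = card (a - b) + card (b - a)"
    unfolding vadd_def using assms by (intro card_Un_disjoint) auto
  have 2: "card (a - b) + card (a \<inter> b) = card a"
    using assms card_Diff_subset_Int[of a b] card_mono[of a "a \<inter> b"] by auto
  have 3: "card (b - a) + card (a \<inter> b) = card b"
    using assms card_Diff_subset_Int[of b a] card_mono[of b "a \<inter> b"] by (auto simp: Int_commute)
  show ?thesis using 1 2 3 by presburger
qed

lemma key:
  assumes sg: "is_subgroup l r A"
  shows "\<And>d x. n = card ({0..<l+r} - d) \<Longrightarrow> d \<subseteq> {0..<l+r} \<Longrightarrow> x \<subseteq> d \<Longrightarrow>
     (\<forall>h\<in>A. h \<subseteq> d \<longrightarrow> even (card (x \<inter> h))) \<Longrightarrow>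
     \<exists>\<beta>. \<beta> \<subseteq> {0..<l+r} \<and> (\<forall>a\<in>A. even (card (\<beta> \<inter> a))) \<and> d \<inter> \<beta> = x"
proof (induction n)
  case 0
  then have "d = {0..<l+r}" by auto
  moreover have "\<forall>a\<in>A. a \<subseteq> {0..<l+r}" using sg unfolding is_subgroup_def vecs_def by auto
  ultimately show ?case using 0 by (intro exI[of _ x]) auto
next
  case (Suc n)
  define U where "U = {0..<l+r}"
  obtain i where i: "i \<in> U - d" using Suc.prems(1) U_def
    by (metis all_not_in_conv card.empty nat.distinct(1))
  define d' where "d' = insert i d"
  have cd': "n = card (U - d')" using Suc.prems(1) i unfolding d'_def U_def
    by (metis Diff_insert card_Diff_singleton diff_Suc_1 finite_Diff finite_atLeastLessThan)
  have d'U: "d' \<subseteq> U" using i Suc.prems(2) U_def d'_def by auto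
  have AU: "\<forall>a\<in>A. a \<subseteq> U" using sg unfolding is_subgroup_def vecs_def U_def by auto
  have fin: "finite U" unfolding U_def by simp
  have xU: "x \<subseteq> U" using Suc.prems(2,3) U_def by auto
  have finx: "finite x" using xU fin finite_subset by blast
  have iX: "i \<notin> x" using i Suc.prems(3) by auto
  show ?case
  proof (cases "\<forall>h\<in>A. h \<subseteq> d' \<longrightarrow> even (card (x \<inter> h))")
    case True
    have xd': "x \<subseteq> d'" using Suc.prems(3) d'_def by auto
    obtain \<beta> where b: "\<beta> \<subseteq> U" "\<forall>a\<in>A. even (card (\<beta> \<inter> a))" "d' \<inter> \<beta> = x"
      using Suc.IH[OF cd'[unfolded U_def] d'U[unfolded U_def] xd' True] U_def by blast
    have "d \<inter> \<beta> = x" using b(3) Suc.prems(3) iX unfolding d'_def by auto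
    then show ?thesis using b U_def by auto
  next
    case False
    then obtain a where a: "a \<in> A" "a \<subseteq> d'" "odd (card (x \<inter> a))" by auto
    have ia: "i \<in> a" using a Suc.prems(4) d'_def by auto
    define x' where "x' = insert i x"
    have "\<forall>b\<in>A. b \<subseteq> d' \<longrightarrow> even (card (x' \<inter> b))"
    proof (intro ballI impI)
      fix b assume bA: "b \<in> A" and bd: "b \<subseteq> d'"
      show "even (card (x' \<inter> b))"
      proof (cases "i \<in> b")
        case True
        have ab: "vadd a b \<in> A" using sg a(1) bA unfolding is_subgroup_def by auto
        have "vadd a b \<subseteq> d" using a(2) bd ia True unfolding vadd_def d'_def by auto
        then have e: "even (card (x \<inter> vadd a b))" using Suc.prems(4) ab by auto
        have "x \<inter> vadd a b = vadd (x \<inter> a) (x \<inter> b)" unfolding vadd_def by auto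
        then have "odd (card (x \<inter> b))" using e a(3) card_vadd_parity[of "x \<inter> a" "x \<inter> b"] finx
          by auto
        moreover have "x' \<inter> b = insert i (x \<inter> b)" using True x'_def by auto
        ultimately show ?thesis using iX finx by simp
      next
        case False
        then have "b \<subseteq> d" using bd d'_def by auto
        then have "even (card (x \<inter> b))" using Suc.prems(4) bA by auto
        moreover have "x' \<inter> b = x \<inter> b" using False x'_def by auto
        ultimately show ?thesis by simp
      qed
    qed
    moreover have "x' \<subseteq> d'" using Suc.prems(3) x'_def d'_def by auto
    ultimately obtain \<beta> where b: "\<beta> \<subseteq> U" "\<forall>a\<in>A. even (card (\<beta> \<inter> a))" "d' \<inter> \<beta> = x'"
      using Suc.IH[OF cd'[unfolded U_def] d'U[unfolded U_def]] U_def by blast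
    have "d \<inter> \<beta> = x" using b(3) Suc.prems(3) i unfolding d'_def x'_def by auto
    then show ?thesis using b U_def by auto
  qed
qed

theorem mainTheorem13:
  fixes l r :: nat and d :: "nat set" and A :: "nat set set"
  assumes "d \<in> vecs l r"
    and "is_subgroup l r A"
  shows "(\<lambda>\<alpha>. vmult d \<alpha>) ` perp l r A = perp_d l r d (restr l r A d)"
proof
  have AU: "\<forall>a\<in>A. a \<subseteq> {0..<l+r}" using assms(2) unfolding is_subgroup_def vecs_def by auto
  have dU: "d \<subseteq> {0..<l+r}" using assms(1) unfolding vecs_def by auto
  show "(\<lambda>\<alpha>. vmult d \<alpha>) ` perp l r A \<subseteq> perp_d l r d (restr l r A d)"
  proof
    fix y assume "y \<in> (\<lambda>\<alpha>. vmult d \<alpha>) ` perp l r A"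
    then obtain \<beta> where b: "\<beta> \<in> perp l r A" "y = d \<inter> \<beta>" unfolding vmult_def by auto
    have "y \<in> Zd l r d" using b dU unfolding Zd_def vecs_def vmult_def by auto
    moreover have "even (wt l r (y \<inter> h))" if "h \<in> restr l r A d" for h
    proof -
      have "h \<in> A" "d \<inter> h = h" using that unfolding restr_def Zd_def vmult_def by auto
      then have "y \<inter> h = \<beta> \<inter> h" using b(2) by auto
      then show ?thesis using b(1) \<open>h \<in> A\<close> unfolding perp_def vmult_def by auto
    qed
    ultimately show "y \<in> perp_d l r d (restr l r A d)" unfolding perp_d_def vmult_def by auto
  qed
  show "perp_d l r d (restr l r A d) \<subseteq> (\<lambda>\<alpha>. vmult d \<alpha>) ` perp l r A"
  proof
    fix x assume x: "x \<in> perp_d l r d (restr l r A d)"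
    then have xd: "x \<subseteq> d" unfolding perp_d_def Zd_def vmult_def by auto
    have "\<forall>h\<in>A. h \<subseteq> d \<longrightarrow> even (card (x \<inter> h))"
    proof (intro ballI impI)
      fix h assume "h \<in> A" "h \<subseteq> d"
      then have "h \<in> restr l r A d" using AU unfolding restr_def Zd_def vmult_def vecs_def by auto
      then have "even (wt l r (x \<inter> h))" using x unfolding perp_d_def vmult_def by auto
      then show "even (card (x \<inter> h))" using wt_even[of "x \<inter> h" l r] xd dU by auto
    qed
    then obtain \<beta> where b: "\<beta> \<subseteq> {0..<l+r}" "\<forall>a\<in>A. even (card (\<beta> \<inter> a))" "d \<inter> \<beta> = x"
      using key[OF assms(2) refl dU xd] by blast
    have "\<beta> \<in> perp l r A" unfolding perp_def vecs_def vmult_def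
    proof (intro CollectI conjI ballI)
      show "\<beta> \<subseteq> {0..<l+r}" using b(1) .
      fix a assume "a \<in> A"
      have "\<beta> \<inter> a \<subseteq> {0..<l+r}" using b(1) by auto
      then show "even (wt l r (\<beta> \<inter> a))" using wt_even[of "\<beta> \<inter> a" l r] b(2) \<open>a \<in> A\<close> by simp
    qed
    then show "x \<in> (\<lambda>\<alpha>. vmult d \<alpha>) ` perp l r A" using b(3) unfolding vmult_def by auto
  qed
qed

end
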